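(* For $\lambda\in(-1,1)$ let $B_\lambda(z)=\left(\frac{z-\lambda}{1-\lambda z}\right)^2$, and for $u,w\in(-1,1)$ let $B_{u,w}(z)=\left(\frac{z-w}{1-wz}\right)\left(\frac{z-u}{1-uz}\right)$. Define \[ f_\lambda(u)=\frac{(1+\lambda)u-2\lambda}{2u-(1+\lambda)}. \] Then, for $\lambda\in(-1,1)$, the conjugacy class of $B_\lambda$ within the family $\{B_{u,w}: u,w\in(-1,1)\}$ is parameterized by the curve $w=f_\lambda(u)$ in $(-1,1)^2$; that is, $B_{u,w}$ (with $u,w\in(-1,1)$) is conjugate to $B_\lambda$ by a Möbius transformation if and only if $w=f_\lambda(u)$. Moreover, for $\lambda\in(-1,1)$ the curves $f_\lambda$ are distinct, decreasing, and each intersects the line $u=w$ in only one point, namely at $u=w=\lambda$.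
   Context: Conjugacy means conjugation by a Möbius transformation preserving the unit disk. *)

theory Defs
  imports "HOL-Analysis.Analysis"
begin

definition B1 :: "real \<Rightarrow> complex \<Rightarrow> complex" where
  "B1 l z = ((z - of_real l) / (1 - of_real l * z)) ^ 2"

definition B2 :: "real \<Rightarrow> real \<Rightarrow> complex \<Rightarrow> complex" where
  "B2 u w z = ((z - of_real w) / (1 - of_real w * z)) * ((z - of_real u) / (1 - of_real u * z))"

definition f :: "real \<Rightarrow> real \<Rightarrow> real" where
  "f l u = ((1 + l) * u - 2 * l) / (2 * u - (1 + l))"

definition disk_moebius :: "(complex \<Rightarrow> complex) \<Rightarrow> bool" where
  "disk_moebius \<phi> \<longleftrightarrow>
     (\<exists>a b c d. a * d - b * c \<noteq> 0 \<and> (\<forall>z. \<phi> z = (a * z + b) / (c * z + d)))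
     \<and> \<phi> ` ball 0 1 = ball 0 1"

definition disk_conjugate :: "(complex \<Rightarrow> complex) \<Rightarrow> (complex \<Rightarrow> complex) \<Rightarrow> bool" where
  "disk_conjugate g h \<longleftrightarrow>
     (\<exists>\<phi>. disk_moebius \<phi> \<and> (\<forall>z\<in>ball 0 1. \<phi> (g z) = h (\<phi> z)))"

definition curve :: "real \<Rightarrow> (real \<times> real) set" where
  "curve l = {(u, w). u \<in> {-1<..<1} \<and> w \<in> {-1<..<1} \<and> 2 * u \<noteq> 1 + l \<and> w = f l u}"

end

theory Submission
  imports Defs "HOL-Complex_Analysis.Complex_Analysis"
begin

definition Mr :: "real \<Rightarrow> complex \<Rightarrow> complex" where
  "Mr p z = (z - of_real p) / (1 - of_real p * z)"

definition T :: "real \<Rightarrow> real" where "T x = (1 + x) / (1 - x)"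

lemma B1_Mr: "B1 l z = (Mr l z)^2" by (simp add: B1_def Mr_def)
lemma B2_Mr: "B2 u w z = Mr w z * Mr u z" by (simp add: B2_def Mr_def)

lemma Mr_den: fixes z :: complex assumes "\<bar>p\<bar> < 1" "norm z < 1" shows "1 - of_real p * z \<noteq> 0"
proof
  assume "1 - of_real p * z = 0"
  hence "of_real p * z = 1" by simp
  hence "norm (of_real p * z) = 1" by simp
  moreover have "\<bar>p\<bar> * norm z < 1 * 1" using assms by (intro mult_strict_mono') auto
  ultimately show False by (simp add: norm_mult)
qed

lemma Mr_ball: assumes "\<bar>p\<bar> < 1" "norm z < 1" shows "norm (Mr p z) < 1"
proof -
  have "norm (Moebius_function 0 (of_real p) z) < 1"
    by (rule Moebius_function_norm_lt_1) (use assms in auto)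
  thus ?thesis by (simp add: Moebius_function_simple Mr_def)
qed

lemma frac_cancel: fixes a b k z :: complex
  assumes "k \<noteq> 0" shows "(a - b/k)/(1 - b/k*z) = (k*a - b)/(k - b*z)"
proof -
  have 1: "a - b/k = (k*a-b)/k" using assms by (simp add: field_simps)
  have 2: "1 - b/k*z = (k - b*z)/k" using assms by (simp add: field_simps)
  show ?thesis unfolding 1 2 using assms by simp
qed

lemma frac_cancel2: fixes N D X :: complex
  assumes "D \<noteq> 0" shows "(N/D - X)/(1 - X*(N/D)) = (N - X*D)/(D - X*N)"
proof -
  have 1: "N/D - X = (N - X*D)/D" using assms by (simp add: field_simps)
  have 2: "1 - X*(N/D) = (D - X*N)/D" using assms by (simp add: field_simps)
  show ?thesis unfolding 1 2 using assms by simp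
qed

lemma Mr_comp: assumes "\<bar>x\<bar> < 1" "\<bar>y\<bar> < 1" "norm z < 1"
  shows "Mr x (Mr y z) = Mr ((x+y)/(1+x*y)) z"
proof -
  have d1: "1 - of_real y * z \<noteq> 0" using Mr_den assms by blast
  have d2: "1 - of_real x * Mr y z \<noteq> 0" using Mr_den Mr_ball assms by blast
  have "\<bar>x\<bar>*\<bar>y\<bar> < 1*1" by (rule mult_strict_mono'; use assms in auto)
  hence "\<bar>x*y\<bar> < 1" by (simp add: abs_mult)
  hence d3: "1 + x*y \<noteq> 0" by (auto simp: abs_less_iff)
  have d3': "1 + complex_of_real x * of_real y \<noteq> 0"
  proof -
    have "1 + complex_of_real x * of_real y = of_real (1 + x*y)" by simp
    moreover have "complex_of_real (1 + x*y) \<noteq> 0" using d3 by (simp only: of_real_eq_0_iff) simp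
    ultimately show ?thesis by simp
  qed
  have "Mr x (Mr y z) = ((z - of_real y) - of_real x * (1 - of_real y * z)) / ((1 - of_real y * z) - of_real x * (z - of_real y))"
    using frac_cancel2[OF d1] unfolding Mr_def by simp
  also have "\<dots> = ((1 + of_real x * of_real y) * z - (of_real x + of_real y)) / ((1 + of_real x * of_real y) - (of_real x + of_real y) * z)"
    by (simp add: algebra_simps)
  also have "\<dots> = (z - (of_real x + of_real y)/(1 + of_real x * of_real y)) / (1 - (of_real x + of_real y)/(1 + of_real x * of_real y) * z)"
    using frac_cancel[OF d3'] by simp
  also have "\<dots> = Mr ((x+y)/(1+x*y)) z"
    unfolding Mr_def by simp
  finally show ?thesis .
qed

lemma Mr_inv: assumes "\<bar>p\<bar> < 1" "norm z < 1" shows "Mr (-p) (Mr p z) = z"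
proof -
  have "Moebius_function 0 (of_real (-p)) (Moebius_function 0 (of_real p) z) = z"
    by (rule Moebius_function_compose) (use assms in auto)
  thus ?thesis by (simp add: Moebius_function_simple Mr_def)
qed

lemma Mr_inv': assumes "\<bar>p\<bar> < 1" "norm z < 1" shows "Mr p (Mr (-p) z) = z"
  using Mr_inv[of "-p" z] assms by simp


lemma addfrac_abs: fixes x y :: real assumes "\<bar>x\<bar> < 1" "\<bar>y\<bar> < 1"
  shows "\<bar>(x+y)/(1+x*y)\<bar> < 1" and "1 + x*y > 0"
proof -
  have a: "0 < (1-x)*(1-y)" "0 < (1+x)*(1+y)" using assms by (auto intro: mult_pos_pos)
  show h: "1 + x*y > 0" using a by (simp add: algebra_simps)
  have "x + y < 1 + x*y" "-(1+x*y) < x + y" using a by (simp_all add: algebra_simps)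
  thus "\<bar>(x+y)/(1+x*y)\<bar> < 1" using h by (simp add: abs_less_iff divide_simps)
qed

lemma T_add: fixes x y :: real assumes "\<bar>x\<bar> < 1" "\<bar>y\<bar> < 1"
  shows "T ((x+y)/(1+x*y)) = T x * T y"
proof -
  have h: "1 + x*y > 0" using addfrac_abs assms by blast
  have "1 - (x+y)/(1+x*y) = (1-x)*(1-y)/(1+x*y)" "1 + (x+y)/(1+x*y) = (1+x)*(1+y)/(1+x*y)"
    using h by (simp_all add: field_simps)
  hence "T ((x+y)/(1+x*y)) = ((1+x)*(1+y)/(1+x*y)) / ((1-x)*(1-y)/(1+x*y))" unfolding T_def by simp
  also have "\<dots> = ((1+x)*(1+y))/((1-x)*(1-y))" using h by simp
  also have "\<dots> = T x * T y" unfolding T_def by simp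
  finally show ?thesis .
qed

lemma T_pos: "\<bar>x\<bar> < 1 \<Longrightarrow> T x > 0" unfolding T_def by (auto simp: abs_less_iff)

lemma T_inj: assumes "\<bar>x\<bar> < 1" "\<bar>y\<bar> < 1" "T x = T y" shows "x = y"
proof -
  have "1 - x \<noteq> 0" "1 - y \<noteq> 0" using assms by auto
  hence "(1+x)*(1-y) = (1+y)*(1-x)" using assms(3) unfolding T_def by (simp add: field_simps)
  thus ?thesis by (simp add: algebra_simps)
qed

lemma sq_lemma: fixes s :: real and Y :: complex assumes "\<bar>s\<bar> < 1" "norm Y < 1"
  shows "Mr (-(s^2)) (Mr (-s) Y * Mr s Y) = Y^2"
proof -
  have d1: "1 - of_real s * Y \<noteq> 0" using Mr_den assms by blast
  have d2: "1 + of_real s * Y \<noteq> 0" using Mr_den[of "-s" Y] assms by simp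
  define \<sigma> where "\<sigma> = complex_of_real (s^2)"
  have Q: "(1 - of_real s * Y)*(1 + of_real s * Y) \<noteq> 0" using d1 d2 by simp
  have prod: "Mr (-s) Y * Mr s Y = (Y^2 - \<sigma>)/((1 - of_real s * Y)*(1 + of_real s * Y))"
    unfolding Mr_def \<sigma>_def using d1 d2 by (simp add: field_simps power2_eq_square)
  have "Mr (-(s^2)) (Mr (-s) Y * Mr s Y) = Mr (-(s^2)) ((Y^2 - \<sigma>)/((1 - of_real s * Y)*(1 + of_real s * Y)))"
    by (simp only: prod)
  also have "\<dots> = ((Y^2 - \<sigma>)/((1 - of_real s * Y)*(1 + of_real s * Y)) - (-\<sigma>)) /
          (1 - (-\<sigma>) * ((Y^2 - \<sigma>)/((1 - of_real s * Y)*(1 + of_real s * Y))))"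
    unfolding Mr_def \<sigma>_def by (simp only: of_real_minus)
  also have "\<dots> = ((Y^2 - \<sigma>) - (-\<sigma>)*((1 - of_real s * Y)*(1 + of_real s * Y))) /
      (((1 - of_real s * Y)*(1 + of_real s * Y)) - (-\<sigma>)*(Y^2 - \<sigma>))"
    by (rule frac_cancel2[OF Q])
  also have "\<dots> = (Y^2 * (1 - \<sigma>^2)) / (1 - \<sigma>^2)"
    unfolding \<sigma>_def by (simp add: algebra_simps power2_eq_square)
  also have "\<dots> = Y^2"
  proof -
    have e: "\<sigma>^2 = complex_of_real (s^2 * s^2)" unfolding \<sigma>_def by (simp add: power2_eq_square)
    have h2: "s^2 < 1" using assms by (simp add: abs_square_less_1)
    have h0: "0 \<le> s^2" by simp
    have "s^2 * s^2 < 1 * 1" using mult_strict_mono'[OF h2 h2 h0 h0] .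
    hence "s^2 * s^2 \<noteq> 1" by simp
    hence "complex_of_real (s^2 * s^2) \<noteq> 1" using of_real_eq_1_iff by blast
    hence "1 - \<sigma>^2 \<noteq> 0" unfolding e by simp
    thus ?thesis by simp
  qed
  finally show ?thesis .
qed

lemma T_s: fixes S :: real assumes "S > 0" shows "T ((S-1)/(S+1)) = S" and "\<bar>(S-1)/(S+1)\<bar> < 1"
proof -
  have "S + 1 > 0" using assms by simp
  thus "T ((S-1)/(S+1)) = S" unfolding T_def by (simp add: field_simps)
  show "\<bar>(S-1)/(S+1)\<bar> < 1" using assms \<open>S+1>0\<close> by (simp add: abs_less_iff field_simps)
qed

lemma T_negsq: fixes S :: real assumes "S > 0" shows "T (-(((S-1)/(S+1))^2)) = 2*S/(1+S^2)"
proof -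
  have h: "S + 1 > 0" using assms by simp
  have h2: "1 + S^2 > 0" by (simp add: add_pos_nonneg)
  have a: "1 + (-(((S-1)/(S+1))^2)) = 4*S/(S+1)^2" using h by (simp add: field_simps) (simp add: power2_eq_square algebra_simps)
  have b: "1 - (-(((S-1)/(S+1))^2)) = 2*(1+S^2)/(S+1)^2" using h by (simp add: field_simps) (simp add: power2_eq_square algebra_simps)
  have "T (-(((S-1)/(S+1))^2)) = (4*S/(S+1)^2) / (2*(1+S^2)/(S+1)^2)" unfolding T_def a b ..
  also have "\<dots> = 2*S/(1+S^2)" using h h2 by (simp add: field_simps)
  finally show ?thesis .
qed

lemma T_neg: "T (-x) = 1 / T x"
  unfolding T_def by simp

lemma IF_conj:
  assumes l: "\<bar>l\<bar> < 1" and u: "\<bar>u\<bar> < 1" and w: "\<bar>w\<bar> < 1" and rel: "T u + T w = 2 * T l"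
  shows "\<exists>p. \<bar>p\<bar> < 1 \<and> (\<forall>z\<in>ball 0 1. Mr p (B2 u w z) = B1 l (Mr p z))"
proof -
  define U W L where "U = T u" "W = T w" "L = T l"
  have U: "U > 0" and W: "W > 0" and L: "L > 0" unfolding U_W_L_def using T_pos u w l by auto
  define S where "S = sqrt (U/W)"
  have S: "S > 0" unfolding S_def using U W by simp
  have S2: "S^2 = U/W" unfolding S_def using U W by simp
  define s where "s = (S-1)/(S+1)"
  have s: "\<bar>s\<bar> < 1" "T s = S" unfolding s_def using T_s[OF S] by auto
  define p where "p = -(s^2)"
  have p: "\<bar>p\<bar> < 1" unfolding p_def using s by (simp add: abs_square_less_1)
  have Tp: "T p = 2*S/(1+S^2)" unfolding p_def s_def using T_negsq[OF S] .
  define c where "c = (l+p)/(1+l*p)"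
  have c: "\<bar>c\<bar> < 1" unfolding c_def using addfrac_abs l p by blast
  have Tc: "T c = L * (2*S/(1+S^2))" unfolding c_def using T_add[OF l p] Tp U_W_L_def(3) by simp
  have hu: "(s+c)/(1+s*c) = u"
  proof (rule T_inj)
    show "\<bar>(s+c)/(1+s*c)\<bar> < 1" using addfrac_abs s c by blast
    show "\<bar>u\<bar> < 1" by fact
    have "T ((s+c)/(1+s*c)) = S * (L * (2*S/(1+S^2)))" using T_add[OF s(1) c] s Tc by simp
    also have "\<dots> = (2*L)*S^2/(1+S^2)" by (simp add: power2_eq_square)
    also have "\<dots> = (U+W)*(U/W)/(1+U/W)" using rel S2 unfolding U_W_L_def by simp
    also have "\<dots> = U"
    proof -
      have "U*W + W*W > 0" using U W by (simp add: add_pos_pos)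
      thus ?thesis using U W by (simp add: field_simps)
    qed
    finally show "T ((s+c)/(1+s*c)) = T u" unfolding U_W_L_def .
  qed
  have hw: "((-s)+c)/(1+(-s)*c) = w"
  proof (rule T_inj)
    have s': "\<bar>-s\<bar> < 1" using s by simp
    show "\<bar>((-s)+c)/(1+(-s)*c)\<bar> < 1" using addfrac_abs s' c by blast
    show "\<bar>w\<bar> < 1" by fact
    have "T (((-s)+c)/(1+(-s)*c)) = (1/S) * (L * (2*S/(1+S^2)))" using T_add[OF s' c] s Tc T_neg by simp
    also have "\<dots> = (2*L)/(1+S^2)" using S by (simp add: field_simps)
    also have "\<dots> = (U+W)/(1+U/W)" using rel S2 unfolding U_W_L_def by simp
    also have "\<dots> = W"
    proof -
      have "U + W > 0" using U W by (simp add: add_pos_pos)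
      thus ?thesis using U W by (simp add: field_simps)
    qed
    finally show "T (((-s)+c)/(1+(-s)*c)) = T w" unfolding U_W_L_def .
  qed
  show ?thesis
  proof (intro exI conjI ballI)
    show "\<bar>p\<bar> < 1" by fact
    fix z :: complex assume z: "z \<in> ball 0 1"
    hence zn: "norm z < 1" by simp
    define Y where "Y = Mr c z"
    have Y: "norm Y < 1" unfolding Y_def using Mr_ball c zn by blast
    have "Mr l (Mr p z) = Y" unfolding Y_def c_def using Mr_comp[OF l p zn] .
    hence rhs: "B1 l (Mr p z) = Y^2" by (simp add: B1_Mr)
    have "Mr s Y = Mr u z" unfolding Y_def using Mr_comp[OF s(1) c zn] hu by simp
    moreover have "Mr (-s) Y = Mr w z" unfolding Y_def using Mr_comp[of "-s" c z] s(1) c zn hw by simp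
    ultimately have "B2 u w z = Mr (-s) Y * Mr s Y" by (simp add: B2_Mr)
    hence "Mr p (B2 u w z) = Y^2" using sq_lemma[OF s(1) Y] unfolding p_def by simp
    thus "Mr p (B2 u w z) = B1 l (Mr p z)" using rhs by simp
  qed
qed

lemma aux_div: fixes X K :: real assumes "X > 0" shows "K/(2*X)*X = K/2"
  using assms by simp

lemma no_pole:
  fixes G :: "complex \<Rightarrow> complex" and a b c d z0 :: complex
  assumes form: "\<forall>z\<in>ball 0 1. G z = (a*z+b)/(c*z+d)" and det: "a*d - b*c \<noteq> 0"
    and img: "G ` ball 0 1 \<subseteq> ball 0 1" and z0: "norm z0 < 1"
  shows "c*z0 + d \<noteq> 0"
proof
  assume pole: "c*z0 + d = 0"
  hence "d + c*z0 = 0" by (simp add: add.commute)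
  hence dd: "d = - c*z0" by (simp add: eq_neg_iff_add_eq_0)
  have c0: "c \<noteq> 0"
  proof
    assume "c = 0" hence "d = 0" using dd by simp
    thus False using det \<open>c = 0\<close> by simp
  qed
  have "a*z0 + b \<noteq> 0"
  proof
    assume "a*z0 + b = 0" hence "b + a*z0 = 0" by (simp add: add.commute)
    hence "b = - a*z0" by (simp add: eq_neg_iff_add_eq_0)
    hence "a*d - b*c = a*(-c*z0) - (-a*z0)*c" using dd by simp
    also have "\<dots> = 0" by (simp add: algebra_simps)
    finally show False using det by simp
  qed
  define K where "K = norm (a*z0 + b)"
  have K: "K > 0" unfolding K_def using \<open>a*z0 + b \<noteq> 0\<close> by simp
  have ac: "norm a + norm c > 0" using c0 by (simp add: add_nonneg_pos)
  define t where "t = min ((1 - norm z0)/2) (K/(2*(norm a + norm c)))"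
  have t0: "t > 0" unfolding t_def using z0 K ac by simp
  have t1: "t < 1 - norm z0"
  proof -
    have "t \<le> (1 - norm z0)/2" unfolding t_def by (rule min.cobounded1)
    moreover have "(1 - norm z0)/2 < 1 - norm z0" using z0 by simp
    ultimately show ?thesis by linarith
  qed
  have t2: "t * (norm a + norm c) \<le> K/2"
  proof -
    have "t \<le> K/(2*(norm a + norm c))" unfolding t_def by (rule min.cobounded2)
    hence "t * (norm a + norm c) \<le> K/(2*(norm a + norm c)) * (norm a + norm c)"
      by (rule mult_right_mono) (use ac in auto)
    also have "\<dots> = K/2" using aux_div[OF ac] .
    finally show ?thesis .
  qed
  define z where "z = z0 + of_real t"
  have zn: "norm z < 1"
  proof -
    have "norm z \<le> norm z0 + norm (complex_of_real t)" unfolding z_def by (rule norm_triangle_ineq)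
    also have "\<dots> = norm z0 + t" using t0 by simp
    finally show ?thesis using t1 by simp
  qed
  have cz: "c*z + d = c * of_real t" unfolding z_def using pole by (simp add: algebra_simps)
  have ncz: "norm (c*z + d) = norm c * t" unfolding cz norm_mult using t0 by simp
  have az: "a*z + b = (a*z0 + b) + a * of_real t" unfolding z_def by (simp add: algebra_simps)
  have e: "a*z0 + b = (a*z+b) - a * of_real t" using az by simp
  have "norm (a*z0 + b) \<le> norm (a*z + b) + norm (a * of_real t)"
    unfolding e by (rule norm_triangle_ineq4)
  moreover have "norm (a * of_real t) = norm a * t" using t0 by (simp add: norm_mult)
  ultimately have naz: "K - norm a * t \<le> norm (a*z + b)" unfolding K_def by linarith
  have t2': "norm a * t + norm c * t \<le> K/2" using t2 by (simp only: distrib_left mult.commute)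
  have h: "norm c * t < norm (a*z+b)" using naz t2' K by linarith
  have pos: "norm c * t > 0" using c0 t0 by simp
  have gt: "norm ((a*z+b)/(c*z+d)) > 1" unfolding norm_divide ncz
    using less_divide_eq_1_pos[OF pos] h by blast
  have "z \<in> ball 0 1" using zn by simp
  hence "G z = (a*z+b)/(c*z+d)" using form by blast
  moreover have "G z \<in> ball 0 1" using img \<open>z \<in> ball 0 1\<close> by blast
  ultimately have "norm ((a*z+b)/(c*z+d)) < 1" by simp
  thus False using gt by linarith
qed

lemma Mr_zero: assumes "\<bar>b\<bar> < 1" "norm y < 1" "Mr b y = 0" shows "y = of_real b"
  using assms Mr_den[OF assms(1,2)] unfolding Mr_def by simp

lemma B1_ball: assumes "\<bar>a\<bar> < 1" "norm z < 1" shows "norm (B1 a z) < 1"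
proof -
  have "norm (Mr a z) < 1" using Mr_ball assms by blast
  hence "norm (Mr a z)^2 < 1" by (simp add: abs_square_less_1)
  thus ?thesis by (simp add: B1_Mr norm_power)
qed

lemma conj_B1_unique:
  fixes G :: "complex \<Rightarrow> complex" and \<alpha> \<beta> \<gamma> \<delta> :: complex
  assumes a: "\<bar>a\<bar> < 1" and b: "\<bar>b\<bar> < 1"
    and form: "\<forall>z\<in>ball 0 1. G z = (\<alpha>*z+\<beta>)/(\<gamma>*z+\<delta>)" and det: "\<alpha>*\<delta> - \<beta>*\<gamma> \<noteq> 0"
    and img: "G ` ball 0 1 = ball 0 1"
    and eq: "\<forall>z\<in>ball 0 1. G (B1 a z) = B1 b (G z)"
  shows "a = b"
proof -
  have fz: "G z = (\<alpha>*z+\<beta>)/(\<gamma>*z+\<delta>)" if "norm z < 1" for z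
    using form that by simp
  have den: "\<gamma>*z+\<delta> \<noteq> 0" if "norm z < 1" for z
  proof (rule no_pole[OF form det _ that])
    show "G ` ball 0 1 \<subseteq> ball 0 1" using img by simp
  qed
  have maps: "norm (G z) < 1" if "norm z < 1" for z using img that by auto
  have inj: "x = y" if "norm x < 1" "norm y < 1" "G x = G y" for x y
  proof -
    have "(\<alpha>*x+\<beta>)/(\<gamma>*x+\<delta>) = (\<alpha>*y+\<beta>)/(\<gamma>*y+\<delta>)" using fz that by metis
    hence "(\<alpha>*x+\<beta>)*(\<gamma>*y+\<delta>) = (\<alpha>*y+\<beta>)*(\<gamma>*x+\<delta>)"
      using den that by (simp add: frac_eq_eq)
    hence "(\<alpha>*\<delta> - \<beta>*\<gamma>) * (x - y) = 0" by (simp add: algebra_simps)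
    thus ?thesis using det by simp
  qed
  have bb: "complex_of_real b \<in> ball 0 1" using b by simp
  hence "complex_of_real b \<in> G ` ball 0 1" using img by simp
  then obtain \<beta>0 where "\<beta>0 \<in> ball 0 1" "G \<beta>0 = of_real b" by auto
  hence \<beta>0: "norm \<beta>0 < 1" "G \<beta>0 = of_real b" by auto
  define \<alpha>0 where "\<alpha>0 = B1 a \<beta>0"
  have \<alpha>0n: "norm \<alpha>0 < 1" unfolding \<alpha>0_def using B1_ball a \<beta>0 by blast
  have G\<alpha>0: "G \<alpha>0 = 0" unfolding \<alpha>0_def using eq \<beta>0 by (simp add: B1_Mr Mr_def)
  have \<alpha>00: "\<alpha>0 = 0"
  proof (rule ccontr)
    assume nz: "\<alpha>0 \<noteq> 0"
    define s where "s = csqrt \<alpha>0"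
    have s2: "s^2 = \<alpha>0" unfolding s_def by simp
    have sn: "norm s < 1"
    proof -
      have "norm s ^ 2 < 1" using s2 \<alpha>0n by (metis norm_power)
      thus ?thesis by (simp add: abs_square_less_1)
    qed
    have s0: "s \<noteq> 0" using s2 nz by auto
    define z1 z2 where "z1 = Mr (-a) s" "z2 = Mr (-a) (-s)"
    have z1n: "norm z1 < 1" "norm z2 < 1" unfolding z1_z2_def using Mr_ball a sn by auto
    have m1: "Mr a z1 = s" "Mr a z2 = -s" unfolding z1_z2_def using Mr_inv' a sn by auto
    have h1: "B1 a z1 = \<alpha>0" "B1 a z2 = \<alpha>0" using m1 s2 by (simp_all add: B1_Mr)
    have "B1 b (G z1) = G (B1 a z1)" "B1 b (G z2) = G (B1 a z2)" using eq z1n by auto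
    hence "B1 b (G z1) = 0" "B1 b (G z2) = 0" using h1 G\<alpha>0 by auto
    hence "Mr b (G z1) = 0" "Mr b (G z2) = 0" by (simp_all add: B1_Mr)
    hence "G z1 = of_real b" "G z2 = of_real b" using Mr_zero b maps z1n by auto
    hence "z1 = z2" using inj z1n by simp
    hence "s = -s" using m1 by simp
    thus False using s0 by simp
  qed
  have G0: "G 0 = 0" using G\<alpha>0 \<alpha>00 by simp
  have "Mr a \<beta>0 = 0" using \<alpha>00 unfolding \<alpha>0_def by (simp add: B1_Mr)
  hence "\<beta>0 = of_real a" using Mr_zero a \<beta>0 by blast
  hence Ga: "G (of_real a) = of_real b" using \<beta>0 by simp
  define \<psi> where "\<psi> y = (\<delta>*y - \<beta>)/(\<alpha> - \<gamma>*y)" for y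
  have \<psi>G: "\<psi> (G z) = z" and \<psi>den: "\<alpha> - \<gamma> * G z \<noteq> 0" if "norm z < 1" for z
  proof -
    have D: "\<gamma>*z+\<delta> \<noteq> 0" using den that .
    have e1: "\<alpha> - \<gamma> * G z = (\<alpha>*\<delta> - \<beta>*\<gamma>)/(\<gamma>*z+\<delta>)"
      unfolding fz[OF that] using D by (simp add: field_simps)
    have e2: "\<delta> * G z - \<beta> = (\<alpha>*\<delta> - \<beta>*\<gamma>)*z/(\<gamma>*z+\<delta>)"
      unfolding fz[OF that] using D by (simp add: field_simps)
    show "\<alpha> - \<gamma> * G z \<noteq> 0" unfolding e1 using det D by simp
    show "\<psi> (G z) = z" unfolding \<psi>_def e1 e2 using det D by simp
  qed
  have \<psi>maps: "norm (\<psi> y) < 1" and \<psi>den': "\<alpha> - \<gamma>*y \<noteq> 0" if "norm y < 1" for y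
  proof -
    have "y \<in> G ` ball 0 1" using img that by simp
    then obtain z where "z \<in> ball 0 1" "y = G z" by auto
    hence "norm z < 1" "y = G z" by auto
    thus "norm (\<psi> y) < 1" "\<alpha> - \<gamma>*y \<noteq> 0" using \<psi>G \<psi>den by auto
  qed
  have holG: "G holomorphic_on ball 0 1"
  proof (rule holomorphic_transform)
    show "(\<lambda>z. (\<alpha>*z+\<beta>)/(\<gamma>*z+\<delta>)) holomorphic_on ball 0 1"
      using den by (intro holomorphic_intros) auto
    show "\<And>z. z \<in> ball 0 1 \<Longrightarrow> (\<alpha>*z+\<beta>)/(\<gamma>*z+\<delta>) = G z" using fz by simp
  qed
  have hol\<psi>: "\<psi> holomorphic_on ball 0 1"
    unfolding \<psi>_def using \<psi>den' by (intro holomorphic_intros) auto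
  have \<psi>0: "\<psi> 0 = 0" using \<psi>G[of 0] G0 by simp
  define h where "h = G (1/2)"
  have h1: "norm (1/2::complex) < 1" by simp
  have hn: "norm h < 1" unfolding h_def using maps[OF h1] .
  have "norm h \<le> norm (1/2::complex)"
    unfolding h_def by (rule Schwarz_Lemma(1)[OF holG G0 maps h1])
  moreover have "norm (\<psi> h) \<le> norm h"
    by (rule Schwarz_Lemma(1)[OF hol\<psi> \<psi>0 \<psi>maps hn])
  moreover have "\<psi> h = 1/2" unfolding h_def using \<psi>G[OF h1] .
  ultimately have "norm h = norm (1/2::complex)" by simp
  hence ex: "\<exists>z. norm z < 1 \<and> z \<noteq> 0 \<and> norm (G z) = norm z" unfolding h_def
    using h1 by (intro exI[of _ "1/2"]) simp
  obtain \<xi> where \<xi>: "\<And>z. norm z < 1 \<Longrightarrow> G z = \<xi> * z" "norm \<xi> = 1"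
    using Schwarz_Lemma(3)[OF holG G0 maps h1] ex by blast
  have "\<xi> * of_real a = of_real b" using Ga \<xi>(1)[of "of_real a"] a by simp
  moreover have z0b: "(0::complex) \<in> ball 0 1" by simp
  have "G (B1 a 0) = B1 b (G 0)" using eq z0b by blast
  hence "G (B1 a 0) = B1 b 0" using G0 by simp
  hence "\<xi> * (of_real a)^2 = (of_real b)^2"
  proof -
    have "B1 a 0 = (of_real a)^2" "B1 b 0 = (of_real b)^2" by (simp_all add: B1_Mr Mr_def)
    moreover have "norm ((complex_of_real a)^2) < 1" using a by (simp add: norm_power abs_square_less_1)
    ultimately show ?thesis using \<open>G (B1 a 0) = B1 b 0\<close> \<xi>(1)[of "(complex_of_real a)^2"] by simp
  qed
  ultimately have key: "\<xi> * (of_real a)^2 = (\<xi> * of_real a)^2" by simp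
  show "a = b"
  proof (cases "a = 0")
    case True
    thus ?thesis using \<open>\<xi> * of_real a = of_real b\<close> by simp
  next
    case False
    have "\<xi> \<noteq> 0" using \<xi>(2) by auto
    have "\<xi> * (1 - \<xi>) * ((of_real a)^2) = 0" using key by (simp add: algebra_simps power2_eq_square)
    moreover have "(complex_of_real a)^2 \<noteq> 0" using False by simp
    ultimately have "1 - \<xi> = 0" using \<open>\<xi> \<noteq> 0\<close> by simp
    hence "\<xi> = 1" by simp
    thus ?thesis using \<open>\<xi> * of_real a = of_real b\<close> by simp
  qed
qed

lemma mob_comp_frac: fixes a b c d N Dn :: complex assumes "Dn \<noteq> 0"
  shows "(a*(N/Dn)+b)/(c*(N/Dn)+d) = (a*N + b*Dn)/(c*N + d*Dn)"
proof -
  have 1: "a*(N/Dn)+b = (a*N + b*Dn)/Dn" using assms by (simp add: field_simps)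
  have 2: "c*(N/Dn)+d = (c*N + d*Dn)/Dn" using assms by (simp add: field_simps)
  show ?thesis unfolding 1 2 using assms by simp
qed

lemma Mr_image: assumes "\<bar>p\<bar> < 1" shows "Mr p ` ball 0 1 = ball 0 1"
proof
  show "Mr p ` ball 0 1 \<subseteq> ball 0 1" using Mr_ball assms by auto
  show "ball 0 1 \<subseteq> Mr p ` ball 0 1"
  proof
    fix y :: complex assume "y \<in> ball 0 1"
    hence yn: "norm y < 1" by simp
    have "Mr (-p) y \<in> ball 0 1" using Mr_ball[of "-p" y] assms yn by simp
    moreover have "y = Mr p (Mr (-p) y)" using Mr_inv' assms yn by simp
    ultimately show "y \<in> Mr p ` ball 0 1" by blast
  qed
qed

lemma Mr_disk_moebius: assumes "\<bar>p\<bar> < 1" shows "disk_moebius (Mr p)"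
  unfolding disk_moebius_def
proof (intro conjI exI allI)
  show "1 * (1::complex) - (- of_real p) * (- of_real p) \<noteq> 0"
  proof -
    have "p * p < 1 * 1" using assms by (metis abs_mult_self_eq abs_square_less_1 power2_eq_square mult_1)
    hence "1 - p*p \<noteq> 0" by simp
    hence "complex_of_real (1 - p*p) \<noteq> 0" by (simp only: of_real_eq_0_iff not_False_eq_True)
    thus ?thesis by simp
  qed
  fix z show "Mr p z = (1 * z + (- of_real p)) / ((- of_real p) * z + 1)"
    unfolding Mr_def by (simp add: algebra_simps)
next
  show "Mr p ` ball 0 1 = ball 0 1" using Mr_image assms .
qed

lemma B2_ball: assumes "\<bar>u\<bar> < 1" "\<bar>w\<bar> < 1" "norm z < 1" shows "norm (B2 u w z) < 1"
proof -
  have "norm (Mr w z) < 1" "norm (Mr u z) < 1" using Mr_ball assms by auto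
  hence "norm (Mr w z) * norm (Mr u z) < 1 * 1" by (intro mult_strict_mono') auto
  thus ?thesis by (simp add: B2_Mr norm_mult)
qed

lemma Tf: fixes l u :: real assumes d1: "2*u - (1+l) \<noteq> 0"
  shows "T (f l u) = ((1+3*l) - (3+l)*u)/((1-l)*(1-u))"
proof -
  define Dd where "Dd = (1+l) - 2*u"
  have Dd: "Dd \<noteq> 0" unfolding Dd_def using d1 by simp
  have fe: "f l u = (2*l - (1+l)*u)/Dd" unfolding f_def Dd_def
    by (metis minus_diff_eq minus_divide_divide)
  have e1: "1 + f l u = ((1+3*l) - (3+l)*u)/Dd" unfolding fe using Dd
    by (simp add: field_simps) (simp add: Dd_def algebra_simps)
  have e2: "1 - f l u = ((1-l)*(1-u))/Dd" unfolding fe using Dd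
    by (simp add: field_simps) (simp add: Dd_def algebra_simps)
  have "T (f l u) = (((1+3*l) - (3+l)*u)/Dd) / (((1-l)*(1-u))/Dd)" unfolding T_def e1 e2 ..
  also have "\<dots> = ((1+3*l) - (3+l)*u)/((1-l)*(1-u))" using Dd by simp
  finally show ?thesis .
qed

lemma T_pos_rev: "T x > 0 \<Longrightarrow> \<bar>x\<bar> < 1"
  unfolding T_def zero_less_divide_iff by auto

lemma curve_iff:
  assumes l: "\<bar>l\<bar> < 1" and u: "\<bar>u\<bar> < 1" and w: "\<bar>w\<bar> < 1"
  shows "(u, w) \<in> curve l \<longleftrightarrow> T u + T w = 2 * T l"
proof
  assume "(u, w) \<in> curve l"
  hence ne: "2*u \<noteq> 1 + l" and wf: "w = f l u" unfolding curve_def by auto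
  have d1: "2*u - (1+l) \<noteq> 0" using ne by simp
  have "1 - u \<noteq> 0" "1 - l \<noteq> 0" using u l by auto
  have "T w = ((1+3*l) - (3+l)*u)/((1-l)*(1-u))"
    unfolding wf using Tf[OF d1] .
  moreover have "2 * T l - T u = ((1+3*l) - (3+l)*u)/((1-l)*(1-u))"
    unfolding T_def using \<open>1 - u \<noteq> 0\<close> \<open>1 - l \<noteq> 0\<close>
    by (simp add: field_simps)
  ultimately show "T u + T w = 2 * T l" by simp
next
  assume rel: "T u + T w = 2 * T l"
  have "1 - u > 0" "1 - l > 0" "1 + u > 0" "1 + l > 0" "1 - w > 0" "1 + w > 0" using u l w by auto
  have Tw: "T w = ((1+3*l) - (3+l)*u)/((1-l)*(1-u))"
  proof -
    have "T w = 2 * T l - T u" using rel by simp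
    also have "\<dots> = ((1+3*l) - (3+l)*u)/((1-l)*(1-u))"
      unfolding T_def using \<open>1 - u > 0\<close> \<open>1 - l > 0\<close>
      by (simp add: field_simps)
    finally show ?thesis .
  qed
  have Twp: "T w > 0" using T_pos w by blast
  have ne: "2*u \<noteq> 1 + l"
  proof
    assume h: "2*u = 1 + l"
    hence "(1+3*l) - (3+l)*u = -((1-l)*(1-u))" by (simp add: algebra_simps)
    hence "T w = -1" unfolding Tw using \<open>1 - u > 0\<close> \<open>1 - l > 0\<close> by simp
    thus False using Twp by simp
  qed
  have d1: "2*u - (1+l) \<noteq> 0" using ne by simp
  have "w = f l u"
  proof (rule T_inj[OF w])
    have "T (f l u) = ((1+3*l) - (3+l)*u)/((1-l)*(1-u))" using Tf[OF d1] .
    thus "T w = T (f l u)" using Tw by simp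
    thus "\<bar>f l u\<bar> < 1" using Twp T_pos_rev by simp
  qed
  thus "(u, w) \<in> curve l" unfolding curve_def using u w ne by auto
qed

lemma part1:
  assumes l: "\<bar>l\<bar> < 1" and u: "\<bar>u\<bar> < 1" and w: "\<bar>w\<bar> < 1"
  shows "disk_conjugate (B2 u w) (B1 l) \<longleftrightarrow> (u, w) \<in> curve l"
proof
  assume "(u, w) \<in> curve l"
  hence rel: "T u + T w = 2 * T l" using curve_iff l u w by blast
  obtain p where p: "\<bar>p\<bar> < 1" "\<forall>z\<in>ball 0 1. Mr p (B2 u w z) = B1 l (Mr p z)"
    using IF_conj[OF l u w rel] by blast
  show "disk_conjugate (B2 u w) (B1 l)"
    unfolding disk_conjugate_def using Mr_disk_moebius[OF p(1)] p(2) by blast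
next
  assume "disk_conjugate (B2 u w) (B1 l)"
  then obtain \<phi> where dm: "disk_moebius \<phi>" and eq: "\<forall>z\<in>ball 0 1. \<phi> (B2 u w z) = B1 l (\<phi> z)"
    unfolding disk_conjugate_def by blast
  from dm obtain a b c d where det: "a*d - b*c \<noteq> 0" and fm: "\<And>z. \<phi> z = (a*z+b)/(c*z+d)"
    and img: "\<phi> ` ball 0 1 = ball 0 1"
    unfolding disk_moebius_def by blast
  define m where "m = (T u + T w)/2"
  have m: "m > 0" unfolding m_def using T_pos u w by (simp add: add_pos_pos)
  define l' where "l' = (m-1)/(m+1)"
  have l': "\<bar>l'\<bar> < 1" "T l' = m" unfolding l'_def using T_s[OF m] by auto
  have rel': "T u + T w = 2 * T l'" using l'(2) m_def by simp
  obtain p where p: "\<bar>p\<bar> < 1" "\<forall>z\<in>ball 0 1. Mr p (B2 u w z) = B1 l' (Mr p z)"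
    using IF_conj[OF l'(1) u w rel'] by blast
  define P where "P = complex_of_real p"
  define G where "G z = \<phi> (Mr (-p) z)" for z
  have form: "\<forall>z\<in>ball 0 1. G z = ((a + b*P)*z + (a*P + b))/((c + d*P)*z + (c*P + d))"
  proof
    fix z :: complex assume "z \<in> ball 0 1"
    hence zn: "norm z < 1" by simp
    have Dn: "1 + P*z \<noteq> 0" using Mr_den[of "-p" z] p(1) zn unfolding P_def by simp
    have "Mr (-p) z = (z + P)/(1 + P*z)" unfolding Mr_def P_def by simp
    hence "G z = (a*((z + P)/(1 + P*z))+b)/(c*((z + P)/(1 + P*z))+d)" unfolding G_def fm by simp
    also have "\<dots> = (a*(z + P) + b*(1 + P*z))/(c*(z + P) + d*(1 + P*z))"
      by (rule mob_comp_frac[OF Dn])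
    also have "\<dots> = ((a + b*P)*z + (a*P + b))/((c + d*P)*z + (c*P + d))"
      by (simp add: algebra_simps)
    finally show "G z = ((a + b*P)*z + (a*P + b))/((c + d*P)*z + (c*P + d))" .
  qed
  have det': "(a + b*P)*(c*P + d) - (a*P + b)*(c + d*P) \<noteq> 0"
  proof -
    have e: "(a + b*P)*(c*P + d) - (a*P + b)*(c + d*P) = (a*d - b*c) * (1 - P*P)"
      by (simp add: algebra_simps)
    have "p * p < 1 * 1" using p(1) by (metis abs_square_less_1 power2_eq_square mult_1)
    hence "1 - p*p \<noteq> 0" by simp
    hence "complex_of_real (1 - p*p) \<noteq> 0" by (simp only: of_real_eq_0_iff not_False_eq_True)
    hence "1 - P*P \<noteq> 0" unfolding P_def by simp
    thus ?thesis unfolding e using det by simp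
  qed
  have imgG: "G ` ball 0 1 = ball 0 1"
  proof -
    have "G ` ball 0 1 = \<phi> ` (Mr (-p) ` ball 0 1)" unfolding G_def by (simp add: image_image)
    also have "\<dots> = ball 0 1" using Mr_image[of "-p"] p(1) img by simp
    finally show ?thesis .
  qed
  have eqG: "\<forall>z\<in>ball 0 1. G (B1 l' z) = B1 l (G z)"
  proof
    fix z :: complex assume "z \<in> ball 0 1"
    hence zn: "norm z < 1" by simp
    define z' where "z' = Mr (-p) z"
    have z'n: "norm z' < 1" unfolding z'_def using Mr_ball[of "-p" z] p(1) zn by simp
    have "Mr p z' = z" unfolding z'_def using Mr_inv' p(1) zn by blast
    hence h1: "Mr p (B2 u w z') = B1 l' z" using p(2) z'n by auto
    have bn: "norm (B2 u w z') < 1" using B2_ball u w z'n by blast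
    have "Mr (-p) (B1 l' z) = B2 u w z'" unfolding h1[symmetric] using Mr_inv p(1) bn by blast
    hence "G (B1 l' z) = \<phi> (B2 u w z')" unfolding G_def by simp
    also have "\<dots> = B1 l (\<phi> z')" using eq z'n by auto
    also have "\<dots> = B1 l (G z)" unfolding G_def z'_def ..
    finally show "G (B1 l' z) = B1 l (G z)" .
  qed
  have "l' = l" by (rule conj_B1_unique[OF l'(1) l form det' imgG eqG])
  hence "T u + T w = 2 * T l" using rel' by simp
  thus "(u, w) \<in> curve l" using curve_iff l u w by blast
qed

lemma curve_left: assumes "(u, w) \<in> curve l" "\<bar>l\<bar> < 1" shows "2*u < 1 + l"
proof (rule ccontr)
  assume "\<not> 2*u < 1 + l"
  moreover have "2*u \<noteq> 1 + l" "w = f l u" "u < 1" "w < 1" using assms(1) unfolding curve_def by auto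
  ultimately have D: "2*u - (1+l) > 0" by simp
  have "(1+l)*u - 2*l - (2*u - (1+l)) = (1-l)*(1-u)" by (simp add: algebra_simps)
  moreover have "(1-l)*(1-u) > 0" using assms(2) \<open>u < 1\<close> by simp
  ultimately have "(1+l)*u - 2*l > 2*u - (1+l)" by linarith
  hence "f l u > 1" unfolding f_def using D by simp
  thus False using \<open>w = f l u\<close> \<open>w < 1\<close> by simp
qed

lemma curve_decr:
  assumes l: "\<bar>l\<bar> < 1" and c1: "(u1, w1) \<in> curve l" and c2: "(u2, w2) \<in> curve l" and lt: "u1 < u2"
  shows "w2 < w1"
proof -
  have D1: "2*u1 - (1+l) < 0" and D2: "2*u2 - (1+l) < 0" using curve_left[OF c1 l] curve_left[OF c2 l] by auto
  have w1: "w1 = ((1+l)*u1 - 2*l)/(2*u1 - (1+l))" and w2: "w2 = ((1+l)*u2 - 2*l)/(2*u2 - (1+l))"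
    using c1 c2 unfolding curve_def f_def by auto
  define D1' D2' N1 N2 where "D1' = 2*u1 - (1+l)" "D2' = 2*u2 - (1+l)"
    "N1 = (1+l)*u1 - 2*l" "N2 = (1+l)*u2 - 2*l"
  have pp: "D1' * D2' > 0" using D1 D2 unfolding D1'_D2'_N1_N2_def by (simp add: mult_neg_neg)
  have "N1*D2' - N2*D1' = (u2 - u1)*(1-l)^2" unfolding D1'_D2'_N1_N2_def
    by (simp add: algebra_simps power2_eq_square)
  moreover have "(u2 - u1)*(1-l)^2 > 0" using lt l by simp
  ultimately have "N2*D1' < N1*D2'" by linarith
  hence "N2*D1' / (D1'*D2') < N1*D2' / (D1'*D2')" by (rule divide_strict_right_mono[OF _ pp])
  moreover have "N2*D1' / (D1'*D2') = N2/D2'" "N1*D2' / (D1'*D2') = N1/D1'" using D1 D2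
    unfolding D1'_D2'_N1_N2_def by simp_all
  ultimately show ?thesis using w1 w2 unfolding D1'_D2'_N1_N2_def by simp
qed

lemma curve_diag: assumes l: "\<bar>l\<bar> < 1" shows "{u. (u, u) \<in> curve l} = {l}"
proof
  show "{u. (u, u) \<in> curve l} \<subseteq> {l}"
  proof
    fix u assume "u \<in> {u. (u, u) \<in> curve l}"
    hence c: "(u,u) \<in> curve l" by simp
    hence D: "2*u - (1+l) \<noteq> 0" and fu: "u = f l u" and u1: "u < 1" unfolding curve_def by auto
    hence "u * (2*u - (1+l)) = (1+l)*u - 2*l" unfolding f_def by (metis nonzero_eq_divide_eq)
    hence "2 * ((u - 1) * (u - l)) = 0" by (simp add: algebra_simps)
    hence "u = l" using u1 by simp
    thus "u \<in> {l}" by simp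
  qed
  show "{l} \<subseteq> {u. (u, u) \<in> curve l}"
  proof -
    have ne: "2*l \<noteq> 1 + l" using l by auto
    have "l - 1 \<noteq> 0" using l by auto
    have "f l l = l * (l - 1) / (l - 1)" unfolding f_def by (simp add: algebra_simps power2_eq_square)
    also have "\<dots> = l" using \<open>l - 1 \<noteq> 0\<close> by simp
    finally have "(l, l) \<in> curve l" unfolding curve_def using l ne by auto
    thus ?thesis by simp
  qed
qed

theorem theorem3p6:
  shows "(\<forall>l\<in>{-1<..<1}. \<forall>u\<in>{-1<..<1}. \<forall>w\<in>{-1<..<1}.
            disk_conjugate (B2 u w) (B1 l) \<longleftrightarrow> (u, w) \<in> curve l)
       \<and> (\<forall>l1\<in>{-1<..<1}. \<forall>l2\<in>{-1<..<1}. l1 \<noteq> l2 \<longrightarrow> curve l1 \<noteq> curve l2)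
       \<and> (\<forall>l\<in>{-1<..<1}. \<forall>u1 w1 u2 w2. (u1, w1) \<in> curve l \<longrightarrow> (u2, w2) \<in> curve l \<longrightarrow>
            u1 < u2 \<longrightarrow> w2 < w1)
       \<and> (\<forall>l\<in>{-1<..<1}. {u. (u, u) \<in> curve l} = {l})"
proof (intro conjI ballI allI impI)
  fix l u w :: real assume "l \<in> {-1<..<1}" "u \<in> {-1<..<1}" "w \<in> {-1<..<1}"
  thus "disk_conjugate (B2 u w) (B1 l) \<longleftrightarrow> (u, w) \<in> curve l"
    using part1[of l u w] by (simp add: abs_less_iff)
next
  fix l1 l2 :: real assume h: "l1 \<in> {-1<..<1}" "l2 \<in> {-1<..<1}" "l1 \<noteq> l2"
  show "curve l1 \<noteq> curve l2"
  proof
    assume "curve l1 = curve l2"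
    hence "{u. (u, u) \<in> curve l1} = {u. (u, u) \<in> curve l2}" by simp
    hence "{l1} = {l2}" using curve_diag h by (simp add: abs_less_iff)
    thus False using h by simp
  qed
next
  fix l u1 w1 u2 w2 :: real
  assume "l \<in> {-1<..<1}" "(u1, w1) \<in> curve l" "(u2, w2) \<in> curve l" "u1 < u2"
  thus "w2 < w1" using curve_decr[of l u1 w1 u2 w2] by (simp add: abs_less_iff)
next
  fix l :: real assume "l \<in> {-1<..<1}"
  thus "{u. (u, u) \<in> curve l} = {l}" using curve_diag by (simp add: abs_less_iff)
qed

end
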